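(* Let $(X,\phi)$ be an acyclic convex geometry. Then $(X,\phi)$ is ranked if and only if its critical base is ranked.
   Context: All sets are finite. A closure operator $\phi$ on $X$ is extensive, monotone and idempotent on $2^X$. $(X,\phi)$ is standard if $\phi(\emptyset)=\emptyset$ and $\phi(\{x\})\setminus\{x\}$ is closed for each $x$. A unit implicational base $\Sigma$ (set of implications $A\to b$, $A\subseteq X$, $b\in X$) is an implicational base of $(X,\phi)$ if its closed sets (sets $S$ such that for each $A\to b\in\Sigma$, $A\not\subseteq S$ or $b\in S$) are exactly the closed sets of $\phi$. $\Sigma$ is acyclic if the directed graph on $X$ with arcs $x\to y$ whenever some $A\to y\in\Sigma$ has $x\in A$ has no directed cycle; irredundant if removing any implication changes the closed sets. An acyclic convex geometry is a standard closure space admitting an acyclic implicational base. $A$ is a minimal generator of $b$ if $b\in\phi(A)$ and $b\notin\phi(A\setminus\{x\})$ for all $x\in A$. An acyclic convex geometry admits a unique irredundant implicational base all of whose implications $A\to b$ have $A$ a minimal generator of $b$; it is called the critical base. A rank function on $\Sigma$ is a map $\rho:X\to\mathbb{N}$ such that $\rho(a)=\rho(b)+1$ whenever $A\to b\in\Sigma$ and $a\in A$; $\Sigma$ is ranked if it admits a rank function. A convex geometry is ranked if it admits a ranked implicational base. *)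

theory Defs
  imports Main
begin

text \<open>A unit implication A \<rightarrow> b is represented as a pair (A, b); a unit implicational
  base is a set of such pairs. The ground set X is an explicit finite carrier.\<close>

type_synonym 'a impl = "'a set \<times> 'a"

definition closure_operator :: "'a set \<Rightarrow> ('a set \<Rightarrow> 'a set) \<Rightarrow> bool" where
  "closure_operator X \<phi> \<longleftrightarrow>
     (\<forall>A. A \<subseteq> X \<longrightarrow> \<phi> A \<subseteq> X) \<and>
     (\<forall>A. A \<subseteq> X \<longrightarrow> A \<subseteq> \<phi> A) \<and>
     (\<forall>A B. A \<subseteq> B \<longrightarrow> B \<subseteq> X \<longrightarrow> \<phi> A \<subseteq> \<phi> B) \<and>
     (\<forall>A. A \<subseteq> X \<longrightarrow> \<phi> (\<phi> A) = \<phi> A)"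

definition closed_sets :: "'a set \<Rightarrow> ('a set \<Rightarrow> 'a set) \<Rightarrow> 'a set set" where
  "closed_sets X \<phi> = {S. S \<subseteq> X \<and> \<phi> S = S}"

definition standard :: "'a set \<Rightarrow> ('a set \<Rightarrow> 'a set) \<Rightarrow> bool" where
  "standard X \<phi> \<longleftrightarrow> closure_operator X \<phi> \<and> \<phi> {} = {} \<and>
     (\<forall>x\<in>X. \<phi> {x} - {x} \<in> closed_sets X \<phi>)"

definition impl_on :: "'a set \<Rightarrow> 'a impl set \<Rightarrow> bool" where
  "impl_on X \<Sigma> \<longleftrightarrow> (\<forall>(A, b)\<in>\<Sigma>. A \<subseteq> X \<and> b \<in> X)"

definition closed_sets_impl :: "'a set \<Rightarrow> 'a impl set \<Rightarrow> 'a set set" where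
  "closed_sets_impl X \<Sigma> = {S. S \<subseteq> X \<and> (\<forall>(A, b)\<in>\<Sigma>. \<not> A \<subseteq> S \<or> b \<in> S)}"

definition implicational_base :: "'a set \<Rightarrow> ('a set \<Rightarrow> 'a set) \<Rightarrow> 'a impl set \<Rightarrow> bool" where
  "implicational_base X \<phi> \<Sigma> \<longleftrightarrow> impl_on X \<Sigma> \<and> closed_sets_impl X \<Sigma> = closed_sets X \<phi>"

definition impl_graph :: "'a impl set \<Rightarrow> ('a \<times> 'a) set" where
  "impl_graph \<Sigma> = {(x, y). \<exists>A. (A, y) \<in> \<Sigma> \<and> x \<in> A}"

definition acyclic_base :: "'a impl set \<Rightarrow> bool" where
  "acyclic_base \<Sigma> \<longleftrightarrow> acyclic (impl_graph \<Sigma>)"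

definition irredundant :: "'a set \<Rightarrow> 'a impl set \<Rightarrow> bool" where
  "irredundant X \<Sigma> \<longleftrightarrow> (\<forall>i\<in>\<Sigma>. closed_sets_impl X (\<Sigma> - {i}) \<noteq> closed_sets_impl X \<Sigma>)"

definition minimal_generator :: "'a set \<Rightarrow> ('a set \<Rightarrow> 'a set) \<Rightarrow> 'a set \<Rightarrow> 'a \<Rightarrow> bool" where
  "minimal_generator X \<phi> A b \<longleftrightarrow> A \<subseteq> X \<and> b \<in> \<phi> A \<and> (\<forall>x\<in>A. b \<notin> \<phi> (A - {x}))"

definition acyclic_convex_geometry :: "'a set \<Rightarrow> ('a set \<Rightarrow> 'a set) \<Rightarrow> bool" where
  "acyclic_convex_geometry X \<phi> \<longleftrightarrow> finite X \<and> standard X \<phi> \<and>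
     (\<exists>\<Sigma>. implicational_base X \<phi> \<Sigma> \<and> acyclic_base \<Sigma>)"

definition is_critical_base :: "'a set \<Rightarrow> ('a set \<Rightarrow> 'a set) \<Rightarrow> 'a impl set \<Rightarrow> bool" where
  "is_critical_base X \<phi> \<Sigma> \<longleftrightarrow> implicational_base X \<phi> \<Sigma> \<and> irredundant X \<Sigma> \<and>
     (\<forall>(A, b)\<in>\<Sigma>. minimal_generator X \<phi> A b)"

text \<open>The critical base: the unique irredundant base whose premises are minimal generators
  (uniqueness for acyclic convex geometries is a result of the paper).\<close>
definition critical_base :: "'a set \<Rightarrow> ('a set \<Rightarrow> 'a set) \<Rightarrow> 'a impl set" where
  "critical_base X \<phi> = (THE \<Sigma>. is_critical_base X \<phi> \<Sigma>)"

definition rank_function :: "'a impl set \<Rightarrow> ('a \<Rightarrow> nat) \<Rightarrow> bool" where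
  "rank_function \<Sigma> \<rho> \<longleftrightarrow> (\<forall>(A, b)\<in>\<Sigma>. \<forall>a\<in>A. \<rho> a = \<rho> b + 1)"

definition ranked_base :: "'a impl set \<Rightarrow> bool" where
  "ranked_base \<Sigma> \<longleftrightarrow> (\<exists>\<rho>. rank_function \<Sigma> \<rho>)"

definition ranked_geometry :: "'a set \<Rightarrow> ('a set \<Rightarrow> 'a set) \<Rightarrow> bool" where
  "ranked_geometry X \<phi> \<longleftrightarrow> (\<exists>\<Sigma>. implicational_base X \<phi> \<Sigma> \<and> ranked_base \<Sigma>)"

end

theory Submission
  imports Defs
begin

locale acg =
  fixes X :: "'a set" and \<phi> :: "'a set \<Rightarrow> 'a set" and S0 :: "'a impl set"
  assumes finX: "finite X" and co: "closure_operator X \<phi>"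
    and b0: "implicational_base X \<phi> S0" and ac0: "acyclic_base S0"
begin

definition R where "R = (impl_graph S0)\<^sup>+"
definition Anc where "Anc y = {x. (x,y) \<in> R}"

lemma co': "(\<forall>A. A \<subseteq> X \<longrightarrow> \<phi> A \<subseteq> X) \<and>
     (\<forall>A. A \<subseteq> X \<longrightarrow> A \<subseteq> \<phi> A) \<and>
     (\<forall>A B. A \<subseteq> B \<longrightarrow> B \<subseteq> X \<longrightarrow> \<phi> A \<subseteq> \<phi> B) \<and>
     (\<forall>A. A \<subseteq> X \<longrightarrow> \<phi> (\<phi> A) = \<phi> A)" using co unfolding closure_operator_def .
lemma ext: "A \<subseteq> X \<Longrightarrow> A \<subseteq> \<phi> A" using co' by simp
lemma inX: "A \<subseteq> X \<Longrightarrow> \<phi> A \<subseteq> X" using co' by simp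
lemma mono: "A \<subseteq> B \<Longrightarrow> B \<subseteq> X \<Longrightarrow> \<phi> A \<subseteq> \<phi> B" using co' by simp
lemma idem: "A \<subseteq> X \<Longrightarrow> \<phi> (\<phi> A) = \<phi> A" using co' by simp
lemma least: "A \<subseteq> S \<Longrightarrow> S \<subseteq> X \<Longrightarrow> \<phi> S = S \<Longrightarrow> \<phi> A \<subseteq> S" using mono[of A S] by simp

lemma base_closed: assumes "implicational_base X \<phi> \<Sigma>" "S \<subseteq> X"
  shows "(\<forall>(D,y)\<in>\<Sigma>. D \<subseteq> S \<longrightarrow> y \<in> S) \<longleftrightarrow> \<phi> S = S"
proof -
  have "S \<in> closed_sets_impl X \<Sigma> \<longleftrightarrow> S \<in> closed_sets X \<phi>"
    using assms(1) unfolding implicational_base_def by simp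
  thus ?thesis using assms(2) unfolding closed_sets_impl_def closed_sets_def by auto
qed

lemma base_X: assumes "implicational_base X \<phi> \<Sigma>" "(D,y) \<in> \<Sigma>" shows "D \<subseteq> X" "y \<in> X"
  using assms unfolding implicational_base_def impl_on_def by auto

lemma sound: assumes "implicational_base X \<phi> \<Sigma>" "(D,y) \<in> \<Sigma>" shows "y \<in> \<phi> D"
proof -
  have DX: "D \<subseteq> X" using base_X[OF assms] by auto
  have "\<phi> (\<phi> D) = \<phi> D" using idem DX by auto
  hence "\<forall>(D',y')\<in>\<Sigma>. D' \<subseteq> \<phi> D \<longrightarrow> y' \<in> \<phi> D" using base_closed[OF assms(1) inX[OF DX]] by simp
  thus ?thesis using assms(2) ext[OF DX] by blast
qed

lemma violated: assumes "implicational_base X \<phi> \<Sigma>" "S \<subseteq> X" "\<phi> S \<noteq> S"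
  obtains D y where "(D,y) \<in> \<Sigma>" "D \<subseteq> S" "y \<notin> S"
  using base_closed[OF assms(1,2)] assms(3) by blast

lemma R_irrefl: "(x,x) \<notin> R" using ac0 unfolding acyclic_base_def acyclic_def R_def by blast
lemma R_trans: "(x,y) \<in> R \<Longrightarrow> (y,z) \<in> R \<Longrightarrow> (x,z) \<in> R" unfolding R_def by (meson trancl_trans)
lemma R_edge: "(C,y) \<in> S0 \<Longrightarrow> c \<in> C \<Longrightarrow> (c,y) \<in> R" unfolding R_def impl_graph_def by blast

lemma L: assumes "A \<subseteq> X" "b \<in> \<phi> A" "b \<notin> A" shows "b \<in> \<phi> (A \<inter> Anc b)"
proof -
  define T where "T = A \<union> {y\<in>X. y \<in> \<phi> (A \<inter> Anc y)}"
  have TX: "T \<subseteq> X" using assms(1) T_def by auto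
  have "\<forall>(C,y)\<in>S0. C \<subseteq> T \<longrightarrow> y \<in> T"
  proof (intro ballI, clarify)
    fix C y assume Cy: "(C,y) \<in> S0" and CT: "C \<subseteq> T"
    have yX: "y \<in> X" using base_X[OF b0 Cy] by auto
    have AX: "A \<inter> Anc y \<subseteq> X" using assms(1) by auto
    have "C \<subseteq> \<phi> (A \<inter> Anc y)"
    proof
      fix c assume c: "c \<in> C"
      have cy: "(c,y) \<in> R" by (rule R_edge[OF Cy c])
      show "c \<in> \<phi> (A \<inter> Anc y)"
      proof (cases "c \<in> A")
        case True then have "c \<in> A \<inter> Anc y" using cy Anc_def by auto
        thus ?thesis using ext[OF AX] by auto
      next
        case False then have "c \<in> \<phi> (A \<inter> Anc c)" using c CT T_def by auto
        moreover have "A \<inter> Anc c \<subseteq> A \<inter> Anc y" using cy R_trans Anc_def by auto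
        ultimately show ?thesis using mono[OF _ AX] by blast
      qed
    qed
    moreover have "\<phi> (\<phi> (A \<inter> Anc y)) = \<phi> (A \<inter> Anc y)" using idem[OF AX] .
    ultimately have "y \<in> \<phi> (A \<inter> Anc y)" using base_closed[OF b0 inX[OF AX]] Cy by blast
    thus "y \<in> T" using yX T_def by auto
  qed
  hence "\<phi> T = T" using base_closed[OF b0 TX] by simp
  hence "\<phi> A \<subseteq> T" using least[of A T] TX T_def by auto
  thus ?thesis using assms(2,3) T_def by auto
qed

abbreviation mg where "mg A b \<equiv> minimal_generator X \<phi> A b"

lemma G: assumes "mg A b" "b \<notin> A" shows "A \<subseteq> Anc b"
proof
  fix a assume a: "a \<in> A"
  have AX: "A \<subseteq> X" using assms(1) unfolding minimal_generator_def by auto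
  show "a \<in> Anc b"
  proof (rule ccontr)
    assume "a \<notin> Anc b"
    hence "A \<inter> Anc b \<subseteq> A - {a}" by auto
    moreover have "b \<in> \<phi> (A \<inter> Anc b)" using L[OF AX] assms unfolding minimal_generator_def by auto
    ultimately have "b \<in> \<phi> (A - {a})" using mono[of "A \<inter> Anc b" "A - {a}"] AX by blast
    thus False using assms(1) a unfolding minimal_generator_def by blast
  qed
qed

lemma M: assumes "mg A b" "C \<subseteq> X" "C \<subseteq> \<phi> A" "A \<subseteq> \<phi> C" shows "A \<subseteq> C"
proof
  fix a assume a: "a \<in> A"
  have AX: "A \<subseteq> X" using assms(1) unfolding minimal_generator_def by auto
  have A'X: "A - {a} \<subseteq> X" using AX by auto
  show "a \<in> C"
  proof (rule ccontr)
    assume aC: "a \<notin> C"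
    have aC': "a \<in> \<phi> (C \<inter> Anc a)" using L[OF assms(2)] a assms(4) aC by auto
    have sub: "C \<inter> Anc a \<subseteq> \<phi> (A - {a})"
    proof
      fix c assume c: "c \<in> C \<inter> Anc a"
      hence ca: "(c,a) \<in> R" using Anc_def by auto
      show "c \<in> \<phi> (A - {a})"
      proof (cases "c \<in> A")
        case True
        have "c \<noteq> a" using ca R_irrefl by auto
        thus ?thesis using True ext[OF A'X] by auto
      next
        case False
        have "c \<in> \<phi> A" using c assms(3) by auto
        hence "c \<in> \<phi> (A \<inter> Anc c)" using L[OF AX] False by auto
        moreover have "A \<inter> Anc c \<subseteq> A - {a}"
          using ca R_trans R_irrefl Anc_def by auto
        ultimately show ?thesis using mono[OF _ A'X] by blast
      qed
    qed
    have "\<phi> (C \<inter> Anc a) \<subseteq> \<phi> (A - {a})"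
      using mono[OF sub inX[OF A'X]] idem[OF A'X] by simp
    hence "a \<in> \<phi> (A - {a})" using aC' by auto
    hence "A \<subseteq> \<phi> (A - {a})" using ext[OF A'X] by auto
    hence "\<phi> A \<subseteq> \<phi> (A - {a})" using mono[OF _ inX[OF A'X]] idem[OF A'X] by metis
    thus False using assms(1) a unfolding minimal_generator_def by blast
  qed
qed


lemma mg_X: "mg A b \<Longrightarrow> A \<subseteq> X" unfolding minimal_generator_def by auto

lemma mg_eq: assumes "mg C b" "A \<subseteq> C" "b \<in> \<phi> A" shows "A = C"
proof (rule ccontr)
  assume "A \<noteq> C"
  then obtain x where x: "x \<in> C" "x \<notin> A" using assms(2) by auto
  have "C - {x} \<subseteq> X" using mg_X[OF assms(1)] by auto
  hence "\<phi> A \<subseteq> \<phi> (C - {x})" using mono[of A "C - {x}"] assms(2) x by auto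
  thus False using assms(1,3) x unfolding minimal_generator_def by blast
qed

definition P where "P A b \<longleftrightarrow> mg A b \<and> b \<notin> A \<and>
  (\<forall>C. C \<subseteq> \<phi> A - {b} \<longrightarrow> b \<in> \<phi> C \<longrightarrow> A \<subseteq> \<phi> C)"

lemma crit_sub: assumes "implicational_base X \<phi> \<Sigma>" "P A b"
  obtains D where "(D,b) \<in> \<Sigma>" "A \<subseteq> D"
proof -
  have mgA: "mg A b" and bA: "b \<notin> A" and cr: "\<And>C. C \<subseteq> \<phi> A - {b} \<Longrightarrow> b \<in> \<phi> C \<Longrightarrow> A \<subseteq> \<phi> C"
    using assms(2) unfolding P_def by auto
  have AX: "A \<subseteq> X" using mg_X[OF mgA] .
  have bphi: "b \<in> \<phi> A" using mgA unfolding minimal_generator_def by auto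
  define S where "S = \<phi> A - {b}"
  have SX: "S \<subseteq> X" using inX[OF AX] S_def by auto
  have AS: "A \<subseteq> S" using ext[OF AX] bA S_def by auto
  have "\<phi> A \<subseteq> \<phi> S" using mono[OF AS SX] .
  hence "\<phi> S \<noteq> S" using bphi S_def by auto
  then obtain D y where Dy: "(D,y) \<in> \<Sigma>" "D \<subseteq> S" "y \<notin> S" using violated[OF assms(1) SX] by blast
  have "y \<in> \<phi> D" using sound[OF assms(1) Dy(1)] .
  moreover have "\<phi> D \<subseteq> \<phi> A"
    using mono[OF Dy(2) SX] mono[of S "\<phi> A"] inX[OF AX] idem[OF AX] S_def by auto
  ultimately have yb: "y = b" using Dy(3) S_def by auto
  have DX: "D \<subseteq> X" using base_X[OF assms(1) Dy(1)] by auto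
  have "A \<subseteq> \<phi> D" using cr[of D] Dy(2) S_def sound[OF assms(1) Dy(1)] yb by auto
  moreover have "D \<subseteq> \<phi> A" using Dy(2) S_def by auto
  ultimately have AD: "A \<subseteq> D" using M[OF mgA DX] by blast
  have "(D,b) \<in> \<Sigma>" using Dy(1) yb by simp
  from that[OF this AD] show ?thesis .
qed

lemma crit_in: assumes "implicational_base X \<phi> \<Sigma>" "\<forall>(D,y)\<in>\<Sigma>. mg D y" "P A b"
  shows "(A,b) \<in> \<Sigma>"
proof -
  obtain D where D: "(D,b) \<in> \<Sigma>" "A \<subseteq> D" using crit_sub[OF assms(1,3)] by blast
  have "mg D b" using assms(2) D(1) by auto
  moreover have "b \<in> \<phi> A" using assms(3) unfolding P_def minimal_generator_def by auto
  ultimately have "A = D" using mg_eq D(2) by auto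
  thus ?thesis using D(1) by simp
qed

lemma triv: assumes "irredundant X \<Sigma>" "(A,b) \<in> \<Sigma>" shows "b \<notin> A"
proof
  assume "b \<in> A"
  hence "closed_sets_impl X (\<Sigma> - {(A,b)}) = closed_sets_impl X \<Sigma>"
    unfolding closed_sets_impl_def by auto
  thus False using assms unfolding irredundant_def by blast
qed

lemma crit_P: assumes "implicational_base X \<phi> \<Sigma>" "irredundant X \<Sigma>" "\<forall>(D,y)\<in>\<Sigma>. mg D y"
  and Ab: "(A,b) \<in> \<Sigma>" shows "P A b"
proof -
  have mgA: "mg A b" using assms(3) Ab by auto
  have bA: "b \<notin> A" using triv[OF assms(2) Ab] .
  have AX: "A \<subseteq> X" using mg_X[OF mgA] .
  have "closed_sets_impl X (\<Sigma> - {(A,b)}) \<noteq> closed_sets_impl X \<Sigma>"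
    using assms(2) Ab unfolding irredundant_def by blast
  moreover have "closed_sets_impl X \<Sigma> \<subseteq> closed_sets_impl X (\<Sigma> - {(A,b)})"
    unfolding closed_sets_impl_def by auto
  ultimately obtain S where "S \<in> closed_sets_impl X (\<Sigma> - {(A,b)})" "S \<notin> closed_sets_impl X \<Sigma>"
    by blast
  note Sin = this
  have Sc: "S \<subseteq> X \<and> (\<forall>(D,y)\<in>\<Sigma> - {(A,b)}. \<not> D \<subseteq> S \<or> y \<in> S)"
    using Sin(1) unfolding closed_sets_impl_def by simp
  hence SX: "S \<subseteq> X" by simp
  have Sc': "\<forall>(D,y)\<in>\<Sigma> - {(A,b)}. \<not> D \<subseteq> S \<or> y \<in> S" using Sc by (rule conjunct2)
  have Scl: "\<And>D y. (D,y) \<in> \<Sigma> \<Longrightarrow> (D,y) \<noteq> (A,b) \<Longrightarrow> D \<subseteq> S \<Longrightarrow> y \<in> S"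
  proof -
    fix D y assume h: "(D,y) \<in> \<Sigma>" "(D,y) \<noteq> (A,b)" "D \<subseteq> S"
    have "(D,y) \<in> \<Sigma> - {(A,b)}" using h(1,2) by simp
    from bspec[OF Sc' this] have "\<not> D \<subseteq> S \<or> y \<in> S" by simp
    thus "y \<in> S" using h(3) by simp
  qed
  obtain D0 y0 where D0: "(D0,y0) \<in> \<Sigma>" "D0 \<subseteq> S" "y0 \<notin> S"
  proof -
    have "\<not> (\<forall>(D,y)\<in>\<Sigma>. \<not> D \<subseteq> S \<or> y \<in> S)" using Sin(2) SX unfolding closed_sets_impl_def by simp
    then obtain p where p: "p \<in> \<Sigma>" "\<not> (case p of (D,y) \<Rightarrow> \<not> D \<subseteq> S \<or> y \<in> S)" by blast
    obtain D y where "p = (D,y)" by (cases p)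
    thus ?thesis using that p by simp
  qed
  have "(D0,y0) = (A,b)"
  proof (rule ccontr)
    assume "(D0,y0) \<noteq> (A,b)"
    hence "y0 \<in> S" using Scl[OF D0(1) _ D0(2)] by simp
    thus False using D0(3) by simp
  qed
  hence "D0 = A" "y0 = b" by simp_all
  hence AS: "A \<subseteq> S" and bS: "b \<notin> S" using D0(2,3) by simp_all
  have grph: "\<And>D y d. (D,y) \<in> \<Sigma> \<Longrightarrow> d \<in> D \<Longrightarrow> (d,y) \<in> R"
  proof -
    fix D y d assume "(D,y) \<in> \<Sigma>" "d \<in> D"
    moreover have "mg D y" using assms(3) \<open>(D,y) \<in> \<Sigma>\<close> by auto
    moreover have "y \<notin> D" using triv[OF assms(2) \<open>(D,y) \<in> \<Sigma>\<close>] .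
    ultimately have "D \<subseteq> Anc y" using G by blast
    thus "(d,y) \<in> R" using \<open>d \<in> D\<close> unfolding Anc_def by blast
  qed
  define T where "T = S \<union> {y\<in>X. y = b \<or> (b,y) \<in> R}"
  have TX: "T \<subseteq> X" using SX T_def by auto
  have "\<forall>(D,y)\<in>\<Sigma>. D \<subseteq> T \<longrightarrow> y \<in> T"
  proof (intro ballI, clarify)
    fix D y assume Dy: "(D,y) \<in> \<Sigma>" and DT: "D \<subseteq> T"
    have yX: "y \<in> X" using base_X[OF assms(1) Dy] by auto
    show "y \<in> T"
    proof (cases "y = b \<or> (b,y) \<in> R")
      case True thus ?thesis using yX T_def by auto
    next
      case False
      have "D \<subseteq> S"
      proof
        fix d assume d: "d \<in> D"
        have dy: "(d,y) \<in> R" using grph[OF Dy d] .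
        have "\<not> (d = b \<or> (b,d) \<in> R)" using False dy R_trans[of b d y] by blast
        thus "d \<in> S" using d DT T_def by auto
      qed
      moreover have "(D,y) \<noteq> (A,b)" using False by auto
      ultimately show ?thesis using Scl[OF Dy] T_def by auto
    qed
  qed
  hence "\<phi> T = T" using base_closed[OF assms(1) TX] by simp
  hence phiAT: "\<phi> A \<subseteq> T" using least[of A T] TX AS T_def by auto
  have "\<forall>C. C \<subseteq> \<phi> A - {b} \<longrightarrow> b \<in> \<phi> C \<longrightarrow> A \<subseteq> \<phi> C"
  proof (intro allI impI)
    fix C assume C: "C \<subseteq> \<phi> A - {b}" and bC: "b \<in> \<phi> C"
    have CX: "C \<subseteq> X" using C inX[OF AX] by auto
    define C' where "C' = C \<inter> Anc b"
    have C'X: "C' \<subseteq> X" using CX C'_def by auto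
    have bC': "b \<in> \<phi> C'" using L[OF CX bC] C C'_def by auto
    have C'S: "C' \<subseteq> S"
    proof
      fix c assume c: "c \<in> C'"
      have cb: "(c,b) \<in> R" using c C'_def Anc_def by auto
      have "c \<noteq> b" using cb R_irrefl by auto
      moreover have "(b,c) \<notin> R" using cb R_trans[of b c b] R_irrefl[of b] by blast
      moreover have "c \<in> T" using c C'_def C phiAT by auto
      ultimately show "c \<in> S" using T_def by auto
    qed
    have AC': "A \<subseteq> \<phi> C'"
    proof (rule ccontr)
      assume nA: "\<not> A \<subseteq> \<phi> C'"
      define T2 where "T2 = \<phi> C' \<inter> S"
      have T2X: "T2 \<subseteq> X" using SX T2_def by auto
      have "\<forall>(D,y)\<in>\<Sigma>. D \<subseteq> T2 \<longrightarrow> y \<in> T2"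
      proof (intro ballI, clarify)
        fix D y assume Dy: "(D,y) \<in> \<Sigma>" and DT: "D \<subseteq> T2"
        have DX: "D \<subseteq> X" using base_X[OF assms(1) Dy] by auto
        have "y \<in> \<phi> D" using sound[OF assms(1) Dy] .
        moreover have "\<phi> D \<subseteq> \<phi> C'"
          using mono[of D "\<phi> C'"] DT T2_def inX[OF C'X] idem[OF C'X] by auto
        moreover have "(D,y) \<noteq> (A,b)" using nA DT T2_def by auto
        hence "y \<in> S" using Scl[OF Dy] DT T2_def by auto
        ultimately show "y \<in> T2" using T2_def by blast
      qed
      hence "\<phi> T2 = T2" using base_closed[OF assms(1) T2X] by simp
      moreover have "C' \<subseteq> T2" using ext[OF C'X] C'S T2_def by auto
      ultimately have "\<phi> C' \<subseteq> T2" using least[of C' T2] T2X by blast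
      thus False using bC' bS T2_def by auto
    qed
    have "C' \<subseteq> C" using C'_def by auto
    thus "A \<subseteq> \<phi> C" using AC' mono[OF _ CX] by blast
  qed
  thus ?thesis unfolding P_def using mgA bA by auto
qed

lemma crit_unique: assumes "is_critical_base X \<phi> \<Sigma>1" "is_critical_base X \<phi> \<Sigma>2"
  shows "\<Sigma>1 \<subseteq> \<Sigma>2"
proof
  fix i assume i: "i \<in> \<Sigma>1"
  obtain A b where Ab: "i = (A,b)" by (cases i)
  have c1: "implicational_base X \<phi> \<Sigma>1" "irredundant X \<Sigma>1" "\<forall>(D,y)\<in>\<Sigma>1. mg D y"
    using assms(1) unfolding is_critical_base_def by blast+
  have c2: "implicational_base X \<phi> \<Sigma>2" "\<forall>(D,y)\<in>\<Sigma>2. mg D y"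
    using assms(2) unfolding is_critical_base_def by blast+
  have "(A,b) \<in> \<Sigma>1" using i Ab by simp
  hence "P A b" by (rule crit_P[OF c1])
  hence "(A,b) \<in> \<Sigma>2" by (rule crit_in[OF c2])
  thus "i \<in> \<Sigma>2" using Ab by simp
qed

lemma mg_exists: assumes "S \<subseteq> X" "b \<in> \<phi> S" obtains A where "A \<subseteq> S" "mg A b"
proof -
  define F where "F = {A. A \<subseteq> S \<and> b \<in> \<phi> A}"
  have "finite F" using finX assms(1) F_def finite_subset by (metis (no_types, lifting) Collect_mono Pow_def finite_Pow_iff rev_finite_subset)
  moreover have "S \<in> F" using assms F_def by auto
  ultimately obtain A where A: "A \<in> F" "\<forall>B\<in>F. B \<subseteq> A \<longrightarrow> A = B"
    using finite_has_minimal2[of F S] by auto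
  have "mg A b"
    unfolding minimal_generator_def
  proof (intro conjI ballI)
    show "A \<subseteq> X" using A(1) F_def assms(1) by auto
    show "b \<in> \<phi> A" using A(1) F_def by auto
    fix x assume x: "x \<in> A"
    show "b \<notin> \<phi> (A - {x})"
    proof
      assume "b \<in> \<phi> (A - {x})"
      hence "A - {x} \<in> F" using A(1) F_def by auto
      thus False using A(2) x by auto
    qed
  qed
  thus ?thesis using that A(1) F_def by auto
qed

definition Sm where "Sm = {(A,b). mg A b \<and> b \<notin> A}"

lemma Sm_base: "implicational_base X \<phi> Sm"
  unfolding implicational_base_def
proof
  show "impl_on X Sm" unfolding impl_on_def Sm_def
    using mg_X inX unfolding minimal_generator_def by blast
  show "closed_sets_impl X Sm = closed_sets X \<phi>"
  proof (rule set_eqI)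
    fix S
    show "S \<in> closed_sets_impl X Sm \<longleftrightarrow> S \<in> closed_sets X \<phi>"
    proof
      assume S: "S \<in> closed_sets_impl X Sm"
      hence SX: "S \<subseteq> X" and cl: "\<And>A b. mg A b \<Longrightarrow> b \<notin> A \<Longrightarrow> A \<subseteq> S \<Longrightarrow> b \<in> S"
        unfolding closed_sets_impl_def Sm_def by auto
      have "\<phi> S \<subseteq> S"
      proof
        fix b assume b: "b \<in> \<phi> S"
        obtain A where "A \<subseteq> S" "mg A b" using mg_exists[OF SX b] by blast
        thus "b \<in> S" using cl by blast
      qed
      thus "S \<in> closed_sets X \<phi>" using ext[OF SX] SX unfolding closed_sets_def by auto
    next
      assume "S \<in> closed_sets X \<phi>"
      hence SX: "S \<subseteq> X" and Sc: "\<phi> S = S" unfolding closed_sets_def by auto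
      have "\<And>A b. mg A b \<Longrightarrow> A \<subseteq> S \<Longrightarrow> b \<in> S"
        using mono SX Sc unfolding minimal_generator_def by blast
      thus "S \<in> closed_sets_impl X Sm" using SX unfolding closed_sets_impl_def Sm_def by auto
    qed
  qed
qed

lemma crit_exists: "\<exists>\<Sigma>. is_critical_base X \<phi> \<Sigma>"
proof -
  define F where "F = {\<Sigma>. \<Sigma> \<subseteq> Sm \<and> implicational_base X \<phi> \<Sigma>}"
  have "Sm \<subseteq> Pow X \<times> X" unfolding Sm_def using mg_X inX unfolding minimal_generator_def by blast
  hence "finite Sm" using finX by (meson finite_Pow_iff finite_SigmaI finite_subset)
  hence "finite F" unfolding F_def by auto
  moreover have "Sm \<in> F" using Sm_base F_def by auto
  ultimately obtain \<Sigma> where S: "\<Sigma> \<in> F" "\<forall>B\<in>F. B \<subseteq> \<Sigma> \<longrightarrow> \<Sigma> = B"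
    using finite_has_minimal2[of F Sm] by auto
  have base: "implicational_base X \<phi> \<Sigma>" and sub: "\<Sigma> \<subseteq> Sm" using S(1) F_def by auto
  have "irredundant X \<Sigma>" unfolding irredundant_def
  proof
    fix i assume i: "i \<in> \<Sigma>"
    show "closed_sets_impl X (\<Sigma> - {i}) \<noteq> closed_sets_impl X \<Sigma>"
    proof
      assume eq: "closed_sets_impl X (\<Sigma> - {i}) = closed_sets_impl X \<Sigma>"
      have "impl_on X (\<Sigma> - {i})" using base unfolding implicational_base_def impl_on_def by auto
      hence "implicational_base X \<phi> (\<Sigma> - {i})" using eq base unfolding implicational_base_def by auto
      hence "\<Sigma> - {i} \<in> F" using sub F_def by auto
      thus False using S(2) i by auto
    qed
  qed
  moreover have "\<forall>(A,b)\<in>\<Sigma>. mg A b" using sub Sm_def by auto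
  ultimately show ?thesis using base unfolding is_critical_base_def by auto
qed

lemma crit_base: "is_critical_base X \<phi> (critical_base X \<phi>)"
proof -
  obtain \<Sigma> where "is_critical_base X \<phi> \<Sigma>" using crit_exists by blast
  moreover have "\<And>\<Sigma>'. is_critical_base X \<phi> \<Sigma>' \<Longrightarrow> \<Sigma>' = \<Sigma>"
    using crit_unique calculation by blast
  ultimately show ?thesis unfolding critical_base_def by (rule theI)
qed

end

theorem theorem2:
  fixes X :: "'a set" and \<phi> :: "'a set \<Rightarrow> 'a set"
  assumes "acyclic_convex_geometry X \<phi>"
  shows "ranked_geometry X \<phi> \<longleftrightarrow> ranked_base (critical_base X \<phi>)"
proof -
  obtain S0 where "implicational_base X \<phi> S0" "acyclic_base S0" "finite X" "standard X \<phi>"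
    using assms unfolding acyclic_convex_geometry_def by blast
  then interpret acg X \<phi> S0 unfolding acg_def standard_def by auto
  have cb: "is_critical_base X \<phi> (critical_base X \<phi>)" by (rule crit_base)
  show ?thesis
  proof
    assume "ranked_base (critical_base X \<phi>)"
    thus "ranked_geometry X \<phi>" using cb unfolding ranked_geometry_def is_critical_base_def by auto
  next
    assume "ranked_geometry X \<phi>"
    then obtain Sr \<rho> where Sr: "implicational_base X \<phi> Sr" "rank_function Sr \<rho>"
      unfolding ranked_geometry_def ranked_base_def by blast
    have "rank_function (critical_base X \<phi>) \<rho>" unfolding rank_function_def
    proof (intro ballI, clarify)
      fix A b a assume Ab: "(A,b) \<in> critical_base X \<phi>" and a: "a \<in> A"
      have "P A b" using crit_P[of _ A b] cb Ab unfolding is_critical_base_def by auto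
      then obtain D where D: "(D,b) \<in> Sr" "A \<subseteq> D" using crit_sub[OF Sr(1)] by blast
      thus "\<rho> a = \<rho> b + 1" using Sr(2) a unfolding rank_function_def by blast
    qed
    thus "ranked_base (critical_base X \<phi>)" unfolding ranked_base_def by blast
  qed
qed

end
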